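(* Let $S$ be an oriented 2-manifold diffeomorphic to the 2-torus, let $g$ and $\tilde g$ be Riemannian metrics on $S$ with codifferentials $\delta$ and $\tilde\delta$ respectively, and let $P,Q\in C^\infty(S)$ with $P,Q>0$. Define on $\Omega^1(S)$ the operators $\delta_p = P^{-1}\delta P$ and $\tilde\delta_q = Q^{-1}\tilde\delta Q$ (i.e. $\delta_p\omega = P^{-1}\delta(P\omega)$, $\tilde\delta_q\omega = Q^{-1}\tilde\delta(Q\omega)$). If $\ker\delta_p\subset\ker\tilde\delta_q$ (as subsets of $\Omega^1(S)$), then $g$ and $\tilde g$ are conformally equivalent and $P = cQ$ for some constant $c>0$. *)

theory Defs
  imports "HOL-Analysis.Analysis"
begin

text \<open>The surface S (diffeomorphic to the 2-torus) is modelled, after pulling back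
along a diffeomorphism, by the standard torus R^2/Z^2: functions on S are
Z^2-periodic functions on R^2 (coordinates (x,y)).\<close>

definition periodic2 :: "(real \<times> real \<Rightarrow> 'b) \<Rightarrow> bool" where
  "periodic2 f \<longleftrightarrow> (\<forall>x y. f (x + 1, y) = f (x, y) \<and> f (x, y + 1) = f (x, y))"

definition pdx :: "(real \<times> real \<Rightarrow> real) \<Rightarrow> real \<times> real \<Rightarrow> real" where
  "pdx f = (\<lambda>(x, y). deriv (\<lambda>t. f (t, y)) x)"

definition pdy :: "(real \<times> real \<Rightarrow> real) \<Rightarrow> real \<times> real \<Rightarrow> real" where
  "pdy f = (\<lambda>(x, y). deriv (\<lambda>t. f (x, t)) y)"

inductive_set partials :: "(real \<times> real \<Rightarrow> real) \<Rightarrow> (real \<times> real \<Rightarrow> real) set"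
  for f where
  base: "f \<in> partials f"
| dx: "h \<in> partials f \<Longrightarrow> pdx h \<in> partials f"
| dy: "h \<in> partials f \<Longrightarrow> pdy h \<in> partials f"

definition smooth2 :: "(real \<times> real \<Rightarrow> real) \<Rightarrow> bool" where
  "smooth2 f \<longleftrightarrow> (\<forall>h \<in> partials f. \<forall>p. h differentiable (at p))"

definition torus_fun :: "(real \<times> real \<Rightarrow> real) \<Rightarrow> bool" where
  "torus_fun f \<longleftrightarrow> smooth2 f \<and> periodic2 f"

text \<open>A Riemannian metric g = E dx^2 + 2F dx dy + G dy^2 on the torus.\<close>
definition riem_metric ::
  "(real \<times> real \<Rightarrow> real) \<Rightarrow> (real \<times> real \<Rightarrow> real) \<Rightarrow> (real \<times> real \<Rightarrow> real) \<Rightarrow> bool" where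
  "riem_metric E F G \<longleftrightarrow> torus_fun E \<and> torus_fun F \<and> torus_fun G \<and>
     (\<forall>p. E p > 0 \<and> E p * G p - (F p)^2 > 0)"

text \<open>Codifferential of the 1-form a dx + b dy w.r.t. g = (E,F,G):
  delta w = - (1/sqrt D) (d_x(sqrt D (g^11 a + g^12 b)) + d_y(sqrt D (g^21 a + g^22 b))),
  D = EG - F^2, (g^ij) = (1/D) [[G,-F],[-F,E]].\<close>
definition codiff ::
  "(real \<times> real \<Rightarrow> real) \<Rightarrow> (real \<times> real \<Rightarrow> real) \<Rightarrow> (real \<times> real \<Rightarrow> real) \<Rightarrow>
   (real \<times> real \<Rightarrow> real) \<Rightarrow> (real \<times> real \<Rightarrow> real) \<Rightarrow> real \<times> real \<Rightarrow> real" where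
  "codiff E F G a b = (\<lambda>p.
     let D = (\<lambda>q. E q * G q - (F q)^2) in
     - (1 / sqrt (D p)) *
       (pdx (\<lambda>q. sqrt (D q) * ((G q * a q - F q * b q) / D q)) p
      + pdy (\<lambda>q. sqrt (D q) * ((- F q * a q + E q * b q) / D q)) p))"

definition twisted_codiff ::
  "(real \<times> real \<Rightarrow> real) \<Rightarrow> (real \<times> real \<Rightarrow> real) \<Rightarrow> (real \<times> real \<Rightarrow> real) \<Rightarrow>
   (real \<times> real \<Rightarrow> real) \<Rightarrow> (real \<times> real \<Rightarrow> real) \<Rightarrow> (real \<times> real \<Rightarrow> real) \<Rightarrow> real \<times> real \<Rightarrow> real" where
  "twisted_codiff E F G P a b = (\<lambda>p. (1 / P p) * codiff E F G (\<lambda>q. P q * a q) (\<lambda>q. P q * b q) p)"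

definition ker_twisted ::
  "(real \<times> real \<Rightarrow> real) \<Rightarrow> (real \<times> real \<Rightarrow> real) \<Rightarrow> (real \<times> real \<Rightarrow> real) \<Rightarrow>
   (real \<times> real \<Rightarrow> real) \<Rightarrow> ((real \<times> real \<Rightarrow> real) \<times> (real \<times> real \<Rightarrow> real)) set" where
  "ker_twisted E F G P = {(a, b). torus_fun a \<and> torus_fun b \<and>
      (\<forall>p. twisted_codiff E F G P a b p = 0)}"

definition conformally_equivalent ::
  "(real \<times> real \<Rightarrow> real) \<Rightarrow> (real \<times> real \<Rightarrow> real) \<Rightarrow> (real \<times> real \<Rightarrow> real) \<Rightarrow>
   (real \<times> real \<Rightarrow> real) \<Rightarrow> (real \<times> real \<Rightarrow> real) \<Rightarrow> (real \<times> real \<Rightarrow> real) \<Rightarrow> bool" where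
  "conformally_equivalent E F G E' F' G' \<longleftrightarrow>
     (\<exists>lam. torus_fun lam \<and> (\<forall>p. lam p > 0 \<and> E' p = lam p * E p \<and> F' p = lam p * F p \<and> G' p = lam p * G p))"

end

theory Submission
  imports Defs
begin

lemma comp_diff: fixes f :: "real \<times> real \<Rightarrow> real"
  assumes "DERIV \<phi> (f p) :> d" "f differentiable (at p)"
  shows "(\<lambda>q. \<phi> (f q)) differentiable (at p)"
proof -
  have "\<phi> differentiable (at (f p))" using assms(1) real_differentiable_def by fastforce
  from differentiable_chain_at[OF assms(2) this] show ?thesis by (simp add: o_def)
qed

inductive_set RS :: "(real \<times> real \<Rightarrow> real) set" where
  sm: "smooth2 f \<Longrightarrow> f \<in> RS"
| const: "(\<lambda>q. c) \<in> RS"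
| fst: "(\<lambda>q. fst q) \<in> RS"
| snd: "(\<lambda>q. snd q) \<in> RS"
| add: "f \<in> RS \<Longrightarrow> g \<in> RS \<Longrightarrow> (\<lambda>q. f q + g q) \<in> RS"
| mul: "f \<in> RS \<Longrightarrow> g \<in> RS \<Longrightarrow> (\<lambda>q. f q * g q) \<in> RS"
| inv: "f \<in> RS \<Longrightarrow> \<forall>q. f q \<noteq> 0 \<Longrightarrow> (\<lambda>q. inverse (f q)) \<in> RS"
| sqrt: "f \<in> RS \<Longrightarrow> \<forall>q. f q > 0 \<Longrightarrow> (\<lambda>q. sqrt (f q)) \<in> RS"
| sin: "f \<in> RS \<Longrightarrow> (\<lambda>q. sin (f q)) \<in> RS"
| cos: "f \<in> RS \<Longrightarrow> (\<lambda>q. cos (f q)) \<in> RS"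

lemma RS_differentiable: "h \<in> RS \<Longrightarrow> h differentiable (at p)"
proof (induction h arbitrary: p rule: RS.induct)
  case (sm f) then show ?case unfolding smooth2_def using partials.base by blast
next
  case fst show ?case by (rule bounded_linear_imp_differentiable[OF bounded_linear_fst])
next
  case snd show ?case by (rule bounded_linear_imp_differentiable[OF bounded_linear_snd])
next
  case (inv f)
  have "f p \<noteq> 0" using inv(2) by blast
  then show ?case using inv(3)
    by (intro comp_diff[where \<phi>=inverse]) (auto intro!: derivative_eq_intros)
next
  case (sqrt f)
  have "f p > 0" using sqrt(2) by blast
  then show ?case using sqrt(3)
    by (intro comp_diff[where \<phi>=sqrt]) (auto intro!: derivative_eq_intros)
next
  case (sin f) then show ?case
    by (intro comp_diff[where \<phi>=sin]) (auto intro!: derivative_eq_intros)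
next
  case (cos f) then show ?case
    by (intro comp_diff[where \<phi>=cos]) (auto intro!: derivative_eq_intros)
qed auto

lemma pdx_has: assumes "f differentiable (at (x, y))"
  shows "((\<lambda>t. f (t, y)) has_real_derivative pdx f (x, y)) (at x)"
proof -
  have "(\<lambda>t::real. (t, y)) differentiable (at x)"
    by (rule differentiableI) (auto intro!: derivative_eq_intros)
  from differentiable_chain_at[OF this] assms have "(\<lambda>t. f (t, y)) differentiable (at x)"
    by (simp add: o_def)
  then show ?thesis unfolding pdx_def using DERIV_deriv_iff_real_differentiable by auto
qed

lemma pdy_has: assumes "f differentiable (at (x, y))"
  shows "((\<lambda>t. f (x, t)) has_real_derivative pdy f (x, y)) (at y)"
proof -
  have "(\<lambda>t::real. (x, t)) differentiable (at y)"
    by (rule differentiableI) (auto intro!: derivative_eq_intros)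
  from differentiable_chain_at[OF this] assms have "(\<lambda>t. f (x, t)) differentiable (at y)"
    by (simp add: o_def)
  then show ?thesis unfolding pdy_def using DERIV_deriv_iff_real_differentiable by auto
qed

lemma pdx_eqI: assumes "\<And>x y. ((\<lambda>t. h (t, y)) has_real_derivative d (x, y)) (at x)"
  shows "pdx h = d"
  by (rule ext) (auto simp: pdx_def intro!: DERIV_imp_deriv assms)

lemma pdy_eqI: assumes "\<And>x y. ((\<lambda>t. h (x, t)) has_real_derivative d (x, y)) (at y)"
  shows "pdy h = d"
  by (rule ext) (auto simp: pdy_def intro!: DERIV_imp_deriv assms)

lemma RS_pdx_has: "f \<in> RS \<Longrightarrow> ((\<lambda>t. f (t, y)) has_real_derivative pdx f (x, y)) (at x)"
  by (intro pdx_has RS_differentiable)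

lemma RS_pdy_has: "f \<in> RS \<Longrightarrow> ((\<lambda>t. f (x, t)) has_real_derivative pdy f (x, y)) (at y)"
  by (intro pdy_has RS_differentiable)

lemma partials_trans: "h \<in> partials g \<Longrightarrow> g \<in> partials f \<Longrightarrow> h \<in> partials f"
  by (induction h rule: partials.induct) (auto intro: partials.intros)

lemma smooth2_pd: "smooth2 f \<Longrightarrow> smooth2 (pdx f) \<and> smooth2 (pdy f)"
  unfolding smooth2_def using partials_trans partials.intros by blast

lemma RS_neg: "f \<in> RS \<Longrightarrow> (\<lambda>q. - f q) \<in> RS"
  using RS.mul[OF RS.const[of "-1"], of f] by simp

lemma RS_diff: "f \<in> RS \<Longrightarrow> g \<in> RS \<Longrightarrow> (\<lambda>q. f q - g q) \<in> RS"
  using RS.add[OF _ RS_neg, of f g] by simp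

lemma RS_div: "f \<in> RS \<Longrightarrow> g \<in> RS \<Longrightarrow> \<forall>q. g q \<noteq> 0 \<Longrightarrow> (\<lambda>q. f q / g q) \<in> RS"
  using RS.mul[OF _ RS.inv, of f g] by (simp add: divide_inverse)

lemma RS_pow2: "f \<in> RS \<Longrightarrow> (\<lambda>q. (f q)^2) \<in> RS"
  using RS.mul[of f f] by (simp add: power2_eq_square)

lemmas RSI = RS.const RS.add RS.mul RS.inv RS.sqrt RS.sin RS.cos RS_neg RS_diff RS_div RS_pow2

lemma RS_pd: "h \<in> RS \<Longrightarrow> pdx h \<in> RS \<and> pdy h \<in> RS"
proof (induction h rule: RS.induct)
  case (sm f) then show ?case using smooth2_pd RS.sm by blast
next
  case (const c)
  have "pdx (\<lambda>q. c) = (\<lambda>q. 0)" "pdy (\<lambda>q. c) = (\<lambda>q. 0)"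
    by (rule pdx_eqI pdy_eqI; auto intro!: derivative_eq_intros)+
  then show ?case by (simp add: RS.const)
next
  case fst
  have "pdx (\<lambda>q. fst q) = (\<lambda>q. 1)" "pdy (\<lambda>q. fst q) = (\<lambda>q. 0)"
    by (rule pdx_eqI pdy_eqI; auto intro!: derivative_eq_intros)+
  then show ?case by (simp add: RS.const)
next
  case snd
  have "pdx (\<lambda>q. snd q) = (\<lambda>q. 0)" "pdy (\<lambda>q. snd q) = (\<lambda>q. 1)"
    by (rule pdx_eqI pdy_eqI; auto intro!: derivative_eq_intros)+
  then show ?case by (simp add: RS.const)
next
  case (add f g)
  have "pdx (\<lambda>q. f q + g q) = (\<lambda>q. pdx f q + pdx g q)" "pdy (\<lambda>q. f q + g q) = (\<lambda>q. pdy f q + pdy g q)"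
    by (rule pdx_eqI pdy_eqI; auto intro!: derivative_eq_intros RS_pdx_has RS_pdy_has add)+
  then show ?case using add by (auto intro!: RSI)
next
  case (mul f g)
  have "pdx (\<lambda>q. f q * g q) = (\<lambda>q. pdx f q * g q + f q * pdx g q)" "pdy (\<lambda>q. f q * g q) = (\<lambda>q. pdy f q * g q + f q * pdy g q)"
    by (rule pdx_eqI pdy_eqI; auto intro!: derivative_eq_intros RS_pdx_has RS_pdy_has mul)+
  then show ?case using mul by (auto intro!: RSI)
next
  case (inv f)
  have nz: "\<And>x y. f (x, y) \<noteq> 0" using inv by blast
  have "pdx (\<lambda>q. inverse (f q)) = (\<lambda>q. -1 * (inverse (f q) * (pdx f q * inverse (f q))))"
       "pdy (\<lambda>q. inverse (f q)) = (\<lambda>q. -1 * (inverse (f q) * (pdy f q * inverse (f q))))"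
    by (rule pdx_eqI pdy_eqI; auto intro!: derivative_eq_intros RS_pdx_has RS_pdy_has inv nz)+
  then show ?case using inv by (auto intro!: RSI)
next
  case (sqrt f)
  have ps: "\<And>x y. f (x, y) > 0" using sqrt by blast
  have nz: "\<And>x y. f (x, y) \<noteq> 0" "\<And>x y. \<not> f (x, y) < 0" using ps by (metis less_irrefl, metis less_asym)
  have "pdx (\<lambda>q. sqrt (f q)) = (\<lambda>q. 1/2 * (inverse (sqrt (f q)) * pdx f q))"
       "pdy (\<lambda>q. sqrt (f q)) = (\<lambda>q. 1/2 * (inverse (sqrt (f q)) * pdy f q))"
    by (rule pdx_eqI pdy_eqI; auto intro!: derivative_eq_intros RS_pdx_has RS_pdy_has sqrt simp: divide_simps ps nz)+
  moreover have "\<forall>q. sqrt (f q) \<noteq> 0" using sqrt by (metis less_irrefl real_sqrt_eq_zero_cancel_iff)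
  ultimately show ?case using sqrt by (auto intro!: RSI)
next
  case (sin f)
  have "pdx (\<lambda>q. sin (f q)) = (\<lambda>q. cos (f q) * pdx f q)"
       "pdy (\<lambda>q. sin (f q)) = (\<lambda>q. cos (f q) * pdy f q)"
    by (rule pdx_eqI pdy_eqI; auto intro!: derivative_eq_intros RS_pdx_has RS_pdy_has sin)+
  then show ?case using sin by (auto intro!: RSI)
next
  case (cos f)
  have "pdx (\<lambda>q. cos (f q)) = (\<lambda>q. -1 * (sin (f q) * pdx f q))"
       "pdy (\<lambda>q. cos (f q)) = (\<lambda>q. -1 * (sin (f q) * pdy f q))"
    by (rule pdx_eqI pdy_eqI; auto intro!: derivative_eq_intros RS_pdx_has RS_pdy_has cos)+
  then show ?case using cos by (auto intro!: RSI)
qed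

lemma RS_smooth: assumes "h \<in> RS" shows "smooth2 h"
proof -
  have "g \<in> RS" if "g \<in> partials h" for g using that
    by (induction g rule: partials.induct) (use assms RS_pd in auto)
  then show ?thesis unfolding smooth2_def using RS_differentiable by blast
qed

lemma pdx_lin: assumes "f \<in> RS" "u \<in> RS" "g \<in> RS" "v \<in> RS"
  shows "pdx (\<lambda>q. f q * u q + g q * v q) p = pdx f p * u p + f p * pdx u p + pdx g p * v p + g p * pdx v p"
proof -
  have "pdx (\<lambda>q. f q * u q + g q * v q) = (\<lambda>p. pdx f p * u p + f p * pdx u p + pdx g p * v p + g p * pdx v p)"
    by (rule pdx_eqI; auto intro!: derivative_eq_intros RS_pdx_has assms)
  then show ?thesis by simp
qed

lemma pdy_lin: assumes "f \<in> RS" "u \<in> RS" "g \<in> RS" "v \<in> RS"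
  shows "pdy (\<lambda>q. f q * u q + g q * v q) p = pdy f p * u p + f p * pdy u p + pdy g p * v p + g p * pdy v p"
proof -
  have "pdy (\<lambda>q. f q * u q + g q * v q) = (\<lambda>p. pdy f p * u p + f p * pdy u p + pdy g p * v p + g p * pdy v p)"
    by (rule pdy_eqI; auto intro!: derivative_eq_intros RS_pdy_has assms)
  then show ?thesis by simp
qed

lemma pd_const: "pdx (\<lambda>q. c) = (\<lambda>q. 0)" "pdy (\<lambda>q. c) = (\<lambda>q. 0)"
  by (rule pdx_eqI pdy_eqI; auto intro!: derivative_eq_intros)+

lemma pd_sy: "pdx (\<lambda>q. sin (2* pi* snd q)) = (\<lambda>q. 0)" "pdy (\<lambda>q. sin (2* pi* snd q)) = (\<lambda>q. 2* pi* cos (2* pi* snd q))"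
  "pdx (\<lambda>q. cos (2* pi* snd q)) = (\<lambda>q. 0)" "pdy (\<lambda>q. cos (2* pi* snd q)) = (\<lambda>q. -2* pi* sin (2* pi* snd q))"
  by (rule pdx_eqI pdy_eqI; auto intro!: derivative_eq_intros)+

lemma pd_sx: "pdy (\<lambda>q. sin (2* pi* fst q)) = (\<lambda>q. 0)" "pdx (\<lambda>q. sin (2* pi* fst q)) = (\<lambda>q. 2* pi* cos (2* pi* fst q))"
  "pdy (\<lambda>q. cos (2* pi* fst q)) = (\<lambda>q. 0)" "pdx (\<lambda>q. cos (2* pi* fst q)) = (\<lambda>q. -2* pi* sin (2* pi* fst q))"
  by (rule pdx_eqI pdy_eqI; auto intro!: derivative_eq_intros)+

lemma pd_sxy: "pdx (\<lambda>q. sin (2* pi*(fst q - snd q))) = (\<lambda>q. 2* pi* cos (2* pi*(fst q - snd q)))"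
  "pdy (\<lambda>q. sin (2* pi*(fst q - snd q))) = (\<lambda>q. -2* pi* cos (2* pi*(fst q - snd q)))"
  "pdx (\<lambda>q. cos (2* pi*(fst q - snd q))) = (\<lambda>q. -2* pi* sin (2* pi*(fst q - snd q)))"
  "pdy (\<lambda>q. cos (2* pi*(fst q - snd q))) = (\<lambda>q. 2* pi* sin (2* pi*(fst q - snd q)))"
  by (rule pdx_eqI pdy_eqI; auto intro!: derivative_eq_intros)+

lemma sc_per: "sin (2* pi*(t+1)) = sin (2* pi* t)" "cos (2* pi*(t+1)) = cos (2* pi* t)"
  "sin (2* pi*(t-1)) = sin (2* pi* t)" "cos (2* pi*(t-1)) = cos (2* pi* t)"
proof -
  have a: "2* pi*(t+1) = 2* pi* t + 2* pi" "2* pi*(t-1) + 2* pi = 2* pi* t" by (simp_all add: algebra_simps)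
  show "sin (2* pi*(t+1)) = sin (2* pi* t)" "cos (2* pi*(t+1)) = cos (2* pi* t)"
    unfolding a by simp_all
  show "sin (2* pi*(t-1)) = sin (2* pi* t)" "cos (2* pi*(t-1)) = cos (2* pi* t)"
    using sin_periodic[of "2* pi*(t-1)"] cos_periodic[of "2* pi*(t-1)"] unfolding a by simp_all
qed

lemma per_tests: "periodic2 (\<lambda>q. c)" "periodic2 (\<lambda>q. sin (2* pi* snd q))" "periodic2 (\<lambda>q. cos (2* pi* snd q))"
   "periodic2 (\<lambda>q. sin (2* pi* fst q))" "periodic2 (\<lambda>q. cos (2* pi* fst q))"
   "periodic2 (\<lambda>q. sin (2* pi*(fst q - snd q)))" "periodic2 (\<lambda>q. cos (2* pi*(fst q - snd q)))"
proof -
  have e: "x + 1 - y = (x - y) + 1" "x - (y + 1) = (x - y) - 1" for x y :: real by simp_all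
  show "periodic2 (\<lambda>q. c)" "periodic2 (\<lambda>q. sin (2* pi* snd q))" "periodic2 (\<lambda>q. cos (2* pi* snd q))"
   "periodic2 (\<lambda>q. sin (2* pi* fst q))" "periodic2 (\<lambda>q. cos (2* pi* fst q))"
   "periodic2 (\<lambda>q. sin (2* pi*(fst q - snd q)))" "periodic2 (\<lambda>q. cos (2* pi*(fst q - snd q)))"
    unfolding periodic2_def by (simp_all only: fst_conv snd_conv e sc_per, simp_all)
qed

lemma RS_tests: "(\<lambda>q. sin (2* pi* snd q)) \<in> RS" "(\<lambda>q. cos (2* pi* snd q)) \<in> RS"
   "(\<lambda>q. sin (2* pi* fst q)) \<in> RS" "(\<lambda>q. cos (2* pi* fst q)) \<in> RS"
   "(\<lambda>q. sin (2* pi*(fst q - snd q))) \<in> RS" "(\<lambda>q. cos (2* pi*(fst q - snd q))) \<in> RS"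
  by (intro RSI RS.fst RS.snd)+

lemma alg_u: fixes s D E F G P u v :: real
  assumes "s \<noteq> 0" "D \<noteq> 0" "P \<noteq> 0" "D = E* G - F^2"
  shows "s * ((G * (P * ((E* u+F* v)/(s* P))) - F * (P * ((F* u+G* v)/(s* P)))) / D) = u"
   and "s * ((- F * (P * ((E* u+F* v)/(s* P))) + E * (P * ((F* u+G* v)/(s* P)))) / D) = v"
  using assms by (simp_all add: field_simps power2_eq_square, algebra+)
lemma alg_U: fixes s D E F G P u v s' D' E' F' G' Q :: real
  assumes "s \<noteq> 0" "D' \<noteq> 0" "P \<noteq> 0" "s' \<noteq> 0"
  shows "s' * ((G' * (Q * ((E* u+F* v)/(s* P))) - F' * (Q * ((F* u+G* v)/(s* P)))) / D') =
     s' * Q / (D' * s * P) * (G' * E - F' * F) * u + s' * Q / (D' * s * P) * (G' * F - F' * G) * v"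
   and "s' * ((- F' * (Q * ((E* u+F* v)/(s* P))) + E' * (Q * ((F* u+G* v)/(s* P)))) / D') =
     s' * Q / (D' * s * P) * (E' * F - F' * E) * u + s' * Q / (D' * s * P) * (E' * G - F' * F) * v"
  using assms by (simp_all add: field_simps)

lemma alg_c: fixes E F G E' F' G' P Q l :: real
  assumes "E * G - F^2 > 0" "P > 0" "l > 0" "E' = l * E" "F' = l * F" "G' = l * G"
  shows "sqrt (E' * G' - F'^2) * Q / ((E' * G' - F'^2) * sqrt (E * G - F^2) * P) * (G' * E - F' * F) = Q / P"
proof -
  have e: "E' * G' - F'^2 = l^2 * (E * G - F^2)" using assms by (simp add: algebra_simps power2_eq_square)
  have s: "sqrt (E' * G' - F'^2) = l * sqrt (E * G - F^2)" unfolding e real_sqrt_mult using assms by simp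
  have g: "G' * E - F' * F = l * (E * G - F^2)" using assms by (simp add: algebra_simps power2_eq_square)
  have "sqrt (E * G - F^2) > 0" using assms by simp
  then show ?thesis unfolding s unfolding e g using assms(1-3) by (simp add: field_simps power2_eq_square)
qed

theorem proposition7:
  fixes E F G E' F' G' P Q :: "real \<times> real \<Rightarrow> real"
  assumes "riem_metric E F G" and "riem_metric E' F' G'"
    and "torus_fun P" and "torus_fun Q"
    and "\<forall>p. P p > 0" and "\<forall>p. Q p > 0"
    and "ker_twisted E F G P \<subseteq> ker_twisted E' F' G' Q"
  shows "conformally_equivalent E F G E' F' G' \<and> (\<exists>c>0. \<forall>p. P p = c * Q p)"
proof -
  note rm = assms(1,2)[unfolded riem_metric_def torus_fun_def]
  have RSb: "E \<in> RS" "F \<in> RS" "G \<in> RS" "E' \<in> RS" "F' \<in> RS" "G' \<in> RS" "P \<in> RS" "Q \<in> RS"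
    using rm assms(3,4) unfolding torus_fun_def by (auto intro: RS.sm)
  have perb: "periodic2 E" "periodic2 F" "periodic2 G" "periodic2 E'" "periodic2 F'" "periodic2 G'" "periodic2 P" "periodic2 Q"
    using rm assms(3,4) unfolding torus_fun_def by auto
  have Dpos: "\<And>q. E q * G q - (F q)^2 > 0" "\<And>q. E' q * G' q - (F' q)^2 > 0"
    using rm by auto
  have Epos: "\<And>q. E q > 0" "\<And>q. E' q > 0" using rm by auto
  have Ppos: "\<And>q. P q > 0" "\<And>q. Q q > 0" using assms(5,6) by auto
  define K where "K = (\<lambda>q. sqrt (E' q * G' q - (F' q)^2) * Q q /
      ((E' q * G' q - (F' q)^2) * sqrt (E q * G q - (F q)^2) * P q))"
  define M11 where "M11 = (\<lambda>q. K q * (G' q * E q - F' q * F q))"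
  define M12 where "M12 = (\<lambda>q. K q * (G' q * F q - F' q * G q))"
  define M21 where "M21 = (\<lambda>q. K q * (E' q * F q - F' q * E q))"
  define M22 where "M22 = (\<lambda>q. K q * (E' q * G q - F' q * F q))"
  have sqD: "\<forall>q. sqrt (E q * G q - (F q)^2) > 0" "\<forall>q. sqrt (E' q * G' q - (F' q)^2) > 0"
    using Dpos by auto
  have nz: "\<forall>q. E q * G q - (F q)^2 \<noteq> 0" "\<forall>q. E' q * G' q - (F' q)^2 \<noteq> 0"
     "\<forall>q. P q \<noteq> 0" "\<forall>q. Q q \<noteq> 0"
    "\<forall>q. (E' q * G' q - (F' q)^2) * sqrt (E q * G q - (F q)^2) * P q \<noteq> 0"
    using Dpos Ppos sqD by (auto simp: less_imp_neq[symmetric])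
  have RSK: "K \<in> RS" unfolding K_def using RSb Dpos nz
    by (intro RSI) auto
  have RSM: "M11 \<in> RS" "M12 \<in> RS" "M21 \<in> RS" "M22 \<in> RS"
    unfolding M11_def M12_def M21_def M22_def using RSK RSb by (auto intro!: RSI)
  have key: "pdx M11 p * u p + M11 p * pdx u p + pdx M12 p * v p + M12 p * pdx v p
     + (pdy M21 p * u p + M21 p * pdy u p + pdy M22 p * v p + M22 p * pdy v p) = 0"
    if "u \<in> RS" "v \<in> RS" "periodic2 u" "periodic2 v" "\<forall>p. pdx u p + pdy v p = 0" for u v p
  proof -
    define a where "a = (\<lambda>q. (E q * u q + F q * v q) / (sqrt (E q * G q - (F q)^2) * P q))"
    define b where "b = (\<lambda>q. (F q * u q + G q * v q) / (sqrt (E q * G q - (F q)^2) * P q))"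
    have nzq: "sqrt (E q * G q - (F q)^2) \<noteq> 0" "E q * G q - (F q)^2 \<noteq> 0" "P q \<noteq> 0"
      "sqrt (E' q * G' q - (F' q)^2) \<noteq> 0" "E' q * G' q - (F' q)^2 \<noteq> 0" "Q q \<noteq> 0"
      "E q * G q \<noteq> (F q)^2" "E' q * G' q \<noteq> (F' q)^2" for q
      using Dpos[of q] Ppos[of q] by simp_all
    have nz2: "\<forall>q. sqrt (E q * G q - (F q)^2) * P q \<noteq> 0" using nzq by simp
    have Dp: "\<forall>q. E q * G q - (F q)^2 > 0" using Dpos by blast
    have RSab: "a \<in> RS" "b \<in> RS" unfolding a_def b_def using RSb that nz2 Dp by (auto intro!: RSI)
    have perab: "periodic2 a" "periodic2 b" using perb that(3,4) unfolding a_def b_def periodic2_def by simp_all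
    have eu: "(\<lambda>q. sqrt (E q * G q - (F q)^2) * ((G q * (P q * a q) - F q * (P q * b q)) / (E q * G q - (F q)^2))) = u"
      by (rule ext, unfold a_def b_def, rule alg_u(1)) (simp_all add: nzq)
    have ev: "(\<lambda>q. sqrt (E q * G q - (F q)^2) * ((- F q * (P q * a q) + E q * (P q * b q)) / (E q * G q - (F q)^2))) = v"
      by (rule ext, unfold a_def b_def, rule alg_u(2)) (simp_all add: nzq)
    have "(a,b) \<in> ker_twisted E F G P"
      unfolding ker_twisted_def torus_fun_def twisted_codiff_def codiff_def Let_def
      using RS_smooth RSab perab eu ev that(5) by simp
    hence "(a,b) \<in> ker_twisted E' F' G' Q" using assms(7) by blast
    hence z: "twisted_codiff E' F' G' Q a b p = 0" unfolding ker_twisted_def by (cases p) auto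
    have eU: "(\<lambda>q. sqrt (E' q * G' q - (F' q)^2) * ((G' q * (Q q * a q) - F' q * (Q q * b q)) / (E' q * G' q - (F' q)^2))) = (\<lambda>q. M11 q * u q + M12 q * v q)"
      by (rule ext, unfold a_def b_def M11_def M12_def K_def, rule alg_U(1)) (simp_all add: nzq)
    have eV: "(\<lambda>q. sqrt (E' q * G' q - (F' q)^2) * ((- F' q * (Q q * a q) + E' q * (Q q * b q)) / (E' q * G' q - (F' q)^2))) = (\<lambda>q. M21 q * u q + M22 q * v q)"
      by (rule ext, unfold a_def b_def M21_def M22_def K_def, rule alg_U(2)) (simp_all add: nzq)
    from z have "pdx (\<lambda>q. M11 q * u q + M12 q * v q) p + pdy (\<lambda>q. M21 q * u q + M22 q * v q) p = 0"
      unfolding twisted_codiff_def codiff_def Let_def eU eV using nzq by simp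
    then show ?thesis using pdx_lin pdy_lin RSM that by simp
  qed
  have T1: "pdx M11 p + pdy M21 p = 0" for p
    using key[OF RS.const RS.const per_tests(1) per_tests(1), of 1 0 p] by (simp add: pd_const)
  have T2: "pdx M12 p + pdy M22 p = 0" for p
    using key[OF RS.const RS.const per_tests(1) per_tests(1), of 0 1 p] by (simp add: pd_const)
  have M21z: "M21 p = 0" for p
  proof -
    obtain x y where p: "p = (x,y)" by (cases p)
    have "(pdx M11 p + pdy M21 p) * sin (2* pi* y) + M21 p * (2* pi* cos (2* pi* y)) = 0"
      using key[OF RS_tests(1) RS.const per_tests(2) per_tests(1), of 0 p] p
      unfolding pd_sy pd_const by (simp add: algebra_simps)
    then have h1: "M21 p * cos (2* pi* y) = 0" using T1[of p] by simp
    have "(pdx M11 p + pdy M21 p) * cos (2* pi* y) - M21 p * (2* pi* sin (2* pi* y)) = 0"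
      using key[OF RS_tests(2) RS.const per_tests(3) per_tests(1), of 0 p] p
      unfolding pd_sy pd_const by (simp add: algebra_simps)
    then have h2: "M21 p * sin (2* pi* y) = 0" using T1[of p] by simp
    have "M21 p = M21 p * (sin (2* pi* y))^2 + M21 p * (cos (2* pi* y))^2"
      by (simp add: distrib_left[symmetric])
    also have "\<dots> = 0" unfolding power2_eq_square mult.assoc[symmetric] h1 h2 by simp
    finally show ?thesis .
  qed
  have M12z: "M12 p = 0" for p
  proof -
    obtain x y where p: "p = (x,y)" by (cases p)
    have "(pdx M12 p + pdy M22 p) * sin (2* pi* x) + M12 p * (2* pi* cos (2* pi* x)) = 0"
      using key[OF RS.const RS_tests(3) per_tests(1) per_tests(4), of 0 p] p
      unfolding pd_sx pd_const by (simp add: algebra_simps)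
    then have h1: "M12 p * cos (2* pi* x) = 0" using T2[of p] by simp
    have "(pdx M12 p + pdy M22 p) * cos (2* pi* x) - M12 p * (2* pi* sin (2* pi* x)) = 0"
      using key[OF RS.const RS_tests(4) per_tests(1) per_tests(5), of 0 p] p
      unfolding pd_sx pd_const by (simp add: algebra_simps)
    then have h2: "M12 p * sin (2* pi* x) = 0" using T2[of p] by simp
    have "M12 p = M12 p * (sin (2* pi* x))^2 + M12 p * (cos (2* pi* x))^2"
      by (simp add: distrib_left[symmetric])
    also have "\<dots> = 0" unfolding power2_eq_square mult.assoc[symmetric] h1 h2 by simp
    finally show ?thesis .
  qed
  have M21f: "M21 = (\<lambda>q. 0)" "M12 = (\<lambda>q. 0)" using M21z M12z by auto
  have dM11: "pdx M11 p = 0" for p using T1[of p] unfolding M21f pd_const by simp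
  have dM22: "pdy M22 p = 0" for p using T2[of p] unfolding M21f pd_const by simp
  have M1122: "M11 p = M22 p" for p
  proof -
    obtain x y where p: "p = (x,y)" by (cases p)
    have "(M11 p - M22 p) * (2 * pi * cos (2 * pi * (x - y))) = 0"
      using key[OF RS_tests(5) RS_tests(5) per_tests(6) per_tests(6), of p] p dM11[of p] dM22[of p]
      unfolding pd_sxy M21f pd_const by (simp add: algebra_simps; metis)
    then have h1: "(M11 p - M22 p) * cos (2 * pi * (x - y)) = 0" by simp
    have "(M11 p - M22 p) * (2 * pi * sin (2 * pi * (x - y))) = 0"
      using key[OF RS_tests(6) RS_tests(6) per_tests(7) per_tests(7), of p] p dM11[of p] dM22[of p]
      unfolding pd_sxy M21f pd_const by (simp add: algebra_simps; metis)
    then have h2: "(M11 p - M22 p) * sin (2 * pi * (x - y)) = 0" by simp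
    have "M11 p - M22 p = (M11 p - M22 p) * (sin (2 * pi * (x - y)))^2 + (M11 p - M22 p) * (cos (2 * pi * (x - y)))^2"
      by (simp add: distrib_left[symmetric])
    also have "\<dots> = 0" unfolding power2_eq_square mult.assoc[symmetric] h1 h2 by simp
    finally show ?thesis by simp
  qed
  have M11f: "M22 = M11" using M1122 by auto
  have dy11: "pdy M11 p = 0" for p using dM22[of p] unfolding M11f .
  have cst: "M11 (x, y) = M11 (0, 0)" for x y
  proof -
    have "\<forall>t. DERIV (\<lambda>t. M11 (t, y)) t :> 0" using RS_pdx_has[OF RSM(1)] dM11 by metis
    then have 1: "M11 (x, y) = M11 (0, y)" using DERIV_isconst_all by fastforce
    have "\<forall>t. DERIV (\<lambda>t. M11 (0, t)) t :> 0" using RS_pdy_has[OF RSM(1)] dy11 by metis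
    then have "M11 (0, y) = M11 (0, 0)" using DERIV_isconst_all by fastforce
    with 1 show ?thesis by simp
  qed
  have Kpos: "K q > 0" for q unfolding K_def using Dpos Ppos sqD by simp
  have r1: "G' q * F q = F' q * G q" for q using M12z[of q] Kpos[of q] unfolding M12_def by simp
  have r2: "E' q * F q = F' q * E q" for q using M21z[of q] Kpos[of q] unfolding M21_def by simp
  have r3: "G' q * E q = E' q * G q" for q using M1122[of q] Kpos[of q] unfolding M11_def M22_def by simp
  define lam where "lam = (\<lambda>q. E' q / E q)"
  have lampos: "lam q > 0" for q unfolding lam_def using Epos by simp
  have lamE: "E' q = lam q * E q" "F' q = lam q * F q" "G' q = lam q * G q" for q
    unfolding lam_def using Epos[of q] r1[of q] r2[of q] r3[of q]
    by (simp_all add: field_simps less_imp_neq[symmetric]; metis mult.commute)+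
  have lamRS: "lam \<in> RS" unfolding lam_def using RSb Epos by (auto intro!: RSI simp: less_imp_neq[symmetric])
  have lamper: "periodic2 lam" using perb unfolding lam_def periodic2_def by simp
  have conf: "conformally_equivalent E F G E' F' G'"
    unfolding conformally_equivalent_def torus_fun_def
    using RS_smooth[OF lamRS] lamper lampos lamE by blast
  have M11Q: "M11 q = Q q / P q" for q
    unfolding M11_def K_def
    by (rule alg_c[OF Dpos(1) Ppos(1) lampos lamE])
  have "P p = (P (0,0) / Q (0,0)) * Q p" for p
  proof -
    obtain x y where p: "p = (x,y)" by (cases p)
    have "Q p / P p = Q (0,0) / P (0,0)" using cst[of x y] M11Q p by simp
    then show ?thesis using Ppos[of p] Ppos[of "(0,0)"] by (simp add: field_simps)
  qed
  moreover have "P (0,0) / Q (0,0) > 0" using Ppos by simp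
  ultimately show ?thesis using conf by blast
qed

end
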